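(* Let $d\ge 0$ be an integer and let $L:\mathbb{C}_{2d+2}[z,\overline{z}]\to\mathbb{C}$ be a real linear functional which is non-negative on hermitian squares, i.e. $L(|f(z)|^2)\ge 0$ for all $f\in\mathbb{C}_{d+1}[z]$. Assume moreover that multiplication by $z$ is well defined on the quotient space $A_d$, i.e. for $p\in\mathbb{C}_d[z]$, $L(|p|^2)=0$ implies $L(|zp|^2)=0$ (this holds for instance if $L(|p|^2)>0$ for every nonzero $p\in\mathbb{C}_d[z]$). Let $R=\|M_d\|$ be the operator norm of the compressed multiplier $M_d=\pi_d M_z|_{A_d}:A_d\to A_d$. Then there exist an integer $N\le (d+1)^2$, points $z_1,\dots,z_N\in\mathbb{C}$ with $|z_k|=R$ (i.e. $z_k=Re^{i\theta_k}$ with $\theta_k\in\mathbb{R}$), and weights $c_1,\dots,c_N>0$ such that $$L(h)=\sum_{k=1}^N c_k\, h(z_k,\overline{z_k})$$ for every harmonic polynomial $h\in\mathbb{C}_{d,d}[z,\overline{z}]$ (i.e. every $h$ of degree at most $d$ in $z$ and at most $d$ in $\overline z$ with $\partial_z\partial_{\overline z}h=0$; equivalently $h=p(z)+\overline{q(z)}$ with $p,q\in\mathbb{C}_d[z]$).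
   Context: Notation: $z=x+iy$ is the complex variable on $\mathbb{C}\cong\mathbb{R}^2$. For an integer $n\ge0$, $\mathbb{C}_n[z]$ is the space of complex polynomials in $z$ of degree $\le n$; $\mathbb{C}_n[z,\overline z]$ is the space of complex polynomials in $z,\overline z$ (equivalently in $x,y$) of total degree $\le n$; $\mathbb{C}_{k,\ell}[z,\overline z]$ is the space of polynomials of degree $\le k$ in $z$ and $\le \ell$ in $\overline z$. A linear functional $L$ on $\mathbb{C}_{2m}[z,\overline z]$ is called real if $L(\overline{p})=\overline{L(p)}$ for all $p$. Hilbert space setup: for $L$ as in the statement, $\langle p,q\rangle_L=L(p\overline q)$ is a positive semidefinite hermitian form on $\mathbb{C}_{d+1}[z]$, with null space $N=\{p\in\mathbb{C}_{d+1}[z]: L(|p|^2)=0\}$. For $k\le d+1$, $A_k=\mathbb{C}_k[z]/(\mathbb{C}_k[z]\cap N)$ is a finite-dimensional Hilbert space with the induced inner product, and $A_0\subseteq A_1\subseteq\dots\subseteq A_{d+1}$. $\pi_d$ denotes the orthogonal projection of $A_{d+1}$ onto $A_d$. $M_z:A_d\to A_{d+1}$ is the (assumed well-defined) map induced by $p\mapsto zp$, and $M_d=\pi_d M_z|_{A_d}$ is its compression, a linear endomorphism of $A_d$. *)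

theory Defs
  imports "HOL-Analysis.Analysis" "HOL-Computational_Algebra.Polynomial"
begin

text \<open>A polynomial in z and conj z is represented by its coefficient function:
  c j k is the coefficient of z^j * (conj z)^k.\<close>
type_synonym zpoly = "nat \<Rightarrow> nat \<Rightarrow> complex"

definition tot_deg_le :: "nat \<Rightarrow> zpoly set" where
  "tot_deg_le n = {c. \<forall>j k. n < j + k \<longrightarrow> c j k = 0}"

definition bideg_le :: "nat \<Rightarrow> nat \<Rightarrow> zpoly set" where
  "bideg_le k l = {c. \<forall>i j. (k < i \<or> l < j) \<longrightarrow> c i j = 0}"

definition zp_conj :: "zpoly \<Rightarrow> zpoly" where
  "zp_conj c = (\<lambda>j k. cnj (c k j))"

definition zp_eval :: "nat \<Rightarrow> zpoly \<Rightarrow> complex \<Rightarrow> complex" where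
  "zp_eval n c z = (\<Sum>j\<le>n. \<Sum>k\<le>n. c j k * z ^ j * cnj z ^ k)"

definition zp_dzdzbar :: "zpoly \<Rightarrow> zpoly" where
  "zp_dzdzbar c = (\<lambda>j k. of_nat (Suc j) * of_nat (Suc k) * c (Suc j) (Suc k))"

definition harmonic :: "zpoly \<Rightarrow> bool" where
  "harmonic c \<longleftrightarrow> zp_dzdzbar c = (\<lambda>_ _. 0)"

text \<open>The polynomial f(z) * conj (g(z)) for f, g in C[z].\<close>
definition herm :: "complex poly \<Rightarrow> complex poly \<Rightarrow> zpoly" where
  "herm f g = (\<lambda>j k. coeff f j * cnj (coeff g k))"

definition lin_functional_on :: "zpoly set \<Rightarrow> (zpoly \<Rightarrow> complex) \<Rightarrow> bool" where
  "lin_functional_on S L \<longleftrightarrow>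
     (\<forall>c\<in>S. \<forall>c'\<in>S. L (\<lambda>j k. c j k + c' j k) = L c + L c') \<and>
     (\<forall>a. \<forall>c\<in>S. L (\<lambda>j k. a * c j k) = a * L c)"

definition real_functional_on :: "zpoly set \<Rightarrow> (zpoly \<Rightarrow> complex) \<Rightarrow> bool" where
  "real_functional_on S L \<longleftrightarrow> (\<forall>c\<in>S. L (zp_conj c) = cnj (L c))"

definition Lnorm :: "(zpoly \<Rightarrow> complex) \<Rightarrow> complex poly \<Rightarrow> real" where
  "Lnorm L p = sqrt (Re (L (herm p p)))"

text \<open>q (in C_d[z]) represents pi_d [x] in A_d: x - q is orthogonal to C_d[z].\<close>
definition proj_rep :: "(zpoly \<Rightarrow> complex) \<Rightarrow> nat \<Rightarrow> complex poly \<Rightarrow> complex poly \<Rightarrow> bool" where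
  "proj_rep L d x q \<longleftrightarrow> degree q \<le> d \<and> (\<forall>r. degree r \<le> d \<longrightarrow> L (herm (x - q) r) = 0)"

definition Md_norm :: "(zpoly \<Rightarrow> complex) \<Rightarrow> nat \<Rightarrow> real" where
  "Md_norm L d = Sup {Lnorm L q | p q. degree p \<le> d \<and> Lnorm L p \<le> 1 \<and>
                          proj_rep L d ([:0, 1:] * p) q}"

end

theory Submission
  imports Defs "HOL-Computational_Algebra.Fundamental_Theorem_Algebra"
begin


definition V :: "(nat \<Rightarrow> complex poly) \<Rightarrow> nat \<Rightarrow> complex poly set" where
  "V b k = {y. \<exists>c. y = (\<Sum>i<k. smult (c i) (b i))}"

locale sip =
  fixes ip :: "complex poly \<Rightarrow> complex poly \<Rightarrow> complex"
  assumes ip_add: "ip (f + g) h = ip f h + ip g h"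
    and ip_smult: "ip (smult a f) g = a * ip f g"
    and ip_herm: "ip g f = cnj (ip f g)"
    and ip_pos: "0 \<le> Re (ip f f)"
begin

lemma ip_zero[simp]: "ip 0 g = 0"
  using ip_smult[of 0 g g] by simp

lemma ip_zero2[simp]: "ip g 0 = 0"
  using ip_herm[of 0 g] by simp

lemma ip_add2: "ip h (f + g) = ip h f + ip h g"
  using ip_herm[of h "f+g"] ip_herm[of h f] ip_herm[of h g] ip_add[of f g h] by simp

lemma ip_smult2: "ip g (smult a f) = cnj a * ip g f"
  using ip_herm[of g "smult a f"] ip_herm[of g f] ip_smult[of a f g] by simp

lemma ip_minus: "ip (- f) g = - ip f g"
  using ip_smult[of "-1" f g] by simp

lemma ip_minus2: "ip g (- f) = - ip g f"
  using ip_smult2[of g "-1" f] by simp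

lemma ip_diff: "ip (f - g) h = ip f h - ip g h"
  using ip_add[of f "-g" h] ip_minus[of g h] by simp

lemma ip_diff2: "ip h (f - g) = ip h f - ip h g"
  using ip_add2[of h f "-g"] ip_minus2[of h g] by simp

lemma ip_sum: "ip (\<Sum>i\<in>A. F i) g = (\<Sum>i\<in>A. ip (F i) g)"
  by (induction A rule: infinite_finite_induct) (auto simp: ip_add)

lemma ip_sum2: "ip g (\<Sum>i\<in>A. F i) = (\<Sum>i\<in>A. ip g (F i))"
  by (induction A rule: infinite_finite_induct) (auto simp: ip_add2)

lemma ip_real: "ip f f = of_real (Re (ip f f))"
  using ip_herm[of f f] by (simp add: complex_eq_iff)

lemma ip_Im: "Im (ip f f) = 0"
  using ip_herm[of f f] by (simp add: complex_eq_iff)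

lemma null_orth:
  assumes "ip x x = 0" shows "ip x y = 0"
proof -
  define a where "a = ip x y"
  have key: "0 \<le> Re (ip y y) - 2 * s * (cmod a)^2" for s :: real
  proof -
    have "0 \<le> Re (ip (y - smult (of_real s * cnj a) x) (y - smult (of_real s * cnj a) x))"
      by (rule ip_pos)
    also have "ip (y - smult (of_real s * cnj a) x) (y - smult (of_real s * cnj a) x)
       = ip y y - cnj (of_real s * cnj a) * ip y x - (of_real s * cnj a) * ip x y
          + (of_real s * cnj a) * cnj (of_real s * cnj a) * ip x x"
      by (simp add: ip_diff ip_diff2 ip_smult ip_smult2 algebra_simps)
    also have "ip y x = cnj a" using ip_herm[of y x] a_def by simp
    also note assms
    finally have "0 \<le> Re (ip y y - cnj (of_real s * cnj a) * cnj a - of_real s * cnj a * a)"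
      using a_def by simp
    moreover have "cnj (of_real s * cnj a) * cnj a + of_real s * cnj a * a = of_real (2 * s * (cmod a)^2)"
      by (simp add: complex_eq_iff cmod_def power2_eq_square algebra_simps)
    ultimately have "0 \<le> Re (ip y y - of_real (2 * s * (cmod a)^2))"
      by (metis add.commute diff_diff_eq)
    thus ?thesis by simp
  qed
  show ?thesis
  proof (rule ccontr)
    assume "ip x y \<noteq> 0"
    hence pos: "(cmod a)^2 > 0" using a_def by simp
    have "0 \<le> Re (ip y y) - 2 * ((Re (ip y y) + 1) / (2 * (cmod a)^2)) * (cmod a)^2"
      by (rule key)
    also have "\<dots> = -1" using pos by (simp add: field_simps)
    finally show False by simp
  qed
qed

lemma null_orth2: "ip x x = 0 \<Longrightarrow> ip y x = 0"
  using null_orth[of x y] ip_herm[of y x] by simp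

definition nrm :: "complex poly \<Rightarrow> real" where "nrm f = sqrt (Re (ip f f))"

lemma nrm_nonneg: "0 \<le> nrm f" using ip_pos[of f] by (simp add: nrm_def)

lemma nrm_sq: "(nrm f)^2 = Re (ip f f)"
  using ip_pos[of f] unfolding nrm_def by (rule real_sqrt_pow2)

lemma cauchy_schwarz: "(cmod (ip x y))^2 \<le> Re (ip x x) * Re (ip y y)"
proof (cases "ip y y = 0")
  case True thus ?thesis using null_orth2[of y x] ip_pos[of x] by simp
next
  case False
  define r where "r = Re (ip y y)"
  have yy: "ip y y = of_real r" using ip_real[of y] r_def by simp
  have "r \<noteq> 0" using False yy by auto
  hence rpos: "r > 0" using ip_pos[of y] unfolding r_def by linarith
  define a where "a = ip x y"
  have yx: "ip y x = cnj a" using ip_herm[of y x] a_def by simp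
  define t where "t = a / of_real r"
  have aa: "cmod a * cmod a = Re a * Re a + Im a * Im a" using cmod_power2[of a] by (simp add: power2_eq_square)
  have "0 \<le> Re (ip (x - smult t y) (x - smult t y))" by (rule ip_pos)
  also have "ip (x - smult t y) (x - smult t y) = ip x x - cnj t * a - t * cnj a + t * cnj t * of_real r"
    by (simp add: ip_diff ip_diff2 ip_smult ip_smult2 yy yx a_def algebra_simps)
  also have "\<dots> = ip x x - of_real ((cmod a)^2 / r)"
    using rpos aa by (simp add: t_def complex_eq_iff field_simps power2_eq_square)
  finally have "(cmod a)^2 / r \<le> Re (ip x x)" by simp
  thus ?thesis using rpos by (simp add: a_def r_def field_simps)
qed

lemma nrm_triangle: "nrm (x + y) \<le> nrm x + nrm y"
proof -
  have cs: "cmod (ip x y) \<le> nrm x * nrm y"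
  proof -
    have "(cmod (ip x y))^2 \<le> (nrm x * nrm y)^2"
      using cauchy_schwarz[of x y] by (simp add: power_mult_distrib nrm_sq)
    thus ?thesis using nrm_nonneg[of x] nrm_nonneg[of y] by (simp add: power2_le_iff_abs_le)
  qed
  have "(nrm (x + y))^2 = Re (ip x x) + Re (ip y y) + 2 * Re (ip x y)"
    using ip_herm[of y x] by (simp add: nrm_sq ip_add ip_add2)
  also have "\<dots> \<le> (nrm x)^2 + (nrm y)^2 + 2 * (nrm x * nrm y)"
    using cs complex_Re_le_cmod[of "ip x y"] by (simp add: nrm_sq)
  also have "\<dots> = (nrm x + nrm y)^2" by (simp add: power2_eq_square algebra_simps)
  finally show ?thesis using nrm_nonneg[of x] nrm_nonneg[of y]
    by (simp add: power2_le_iff_abs_le add_nonneg_nonneg)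
qed

lemma nrm_smult: "nrm (smult c x) = cmod c * nrm x"
proof -
  have cc: "c * cnj c = of_real ((cmod c)^2)" using complex_norm_square[of c] by simp
  have "ip (smult c x) (smult c x) = (c * cnj c) * ip x x"
    by (simp add: ip_smult ip_smult2)
  hence "ip (smult c x) (smult c x) = of_real ((cmod c)^2) * ip x x" using cc by simp
  hence "Re (ip (smult c x) (smult c x)) = (cmod c)^2 * Re (ip x x)" by simp
  thus ?thesis by (simp add: nrm_def real_sqrt_mult)
qed


end

lemma smult_sum2: "smult a (\<Sum>i\<in>A. f i) = (\<Sum>i\<in>A. smult a (f i))"
  by (induction A rule: infinite_finite_induct) (simp_all add: smult_add_right)

lemma V_zero: "0 \<in> V b k"
  unfolding V_def by (rule CollectI, rule exI[of _ "\<lambda>_. 0"]) simp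

lemma V_add: "x \<in> V b k \<Longrightarrow> y \<in> V b k \<Longrightarrow> x + y \<in> V b k"
proof -
  assume "x \<in> V b k" "y \<in> V b k"
  then obtain c c' where "x = (\<Sum>i<k. smult (c i) (b i))" "y = (\<Sum>i<k. smult (c' i) (b i))"
    unfolding V_def by auto
  hence "x + y = (\<Sum>i<k. smult (c i + c' i) (b i))" by (simp add: sum.distrib smult_add_left)
  thus ?thesis unfolding V_def by (intro CollectI exI[of _ "\<lambda>i. c i + c' i"])
qed

lemma V_smult: "x \<in> V b k \<Longrightarrow> smult a x \<in> V b k"
proof -
  assume "x \<in> V b k"
  then obtain c where "x = (\<Sum>i<k. smult (c i) (b i))" unfolding V_def by auto
  hence "smult a x = (\<Sum>i<k. smult (a * c i) (b i))" by (simp add: smult_sum2)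
  thus ?thesis unfolding V_def by (intro CollectI exI[of _ "\<lambda>i. a * c i"])
qed

lemma V_minus: "x \<in> V b k \<Longrightarrow> - x \<in> V b k"
  using V_smult[of x b k "-1"] by simp

lemma V_diff: "x \<in> V b k \<Longrightarrow> y \<in> V b k \<Longrightarrow> x - y \<in> V b k"
  using V_add[of x b k "-y"] V_minus[of y b k] by simp

lemma V_mono: "x \<in> V b k \<Longrightarrow> x \<in> V b (Suc k)"
proof -
  assume "x \<in> V b k"
  then obtain c where "x = (\<Sum>i<k. smult (c i) (b i))" unfolding V_def by auto
  hence "x = (\<Sum>i<Suc k. smult (if i < k then c i else 0) (b i))" by simp
  thus ?thesis unfolding V_def by (intro CollectI exI[of _ "\<lambda>i. if i < k then c i else 0"])
qed

lemma V_gen: "b k \<in> V b (Suc k)"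
  unfolding V_def
  by (auto intro!: exI[where x="\<lambda>i. if i = k then 1 else 0"] simp: if_distrib sum.If_cases cong: if_cong)

lemma V_Suc: "y \<in> V b (Suc k) \<Longrightarrow> \<exists>y' a. y' \<in> V b k \<and> y = y' + smult a (b k)"
  unfolding V_def by auto


context sip begin

lemma orth_Suc:
  assumes "\<forall>g\<in>V b k. ip z g = 0" "ip z (b k) = 0" "g \<in> V b (Suc k)"
  shows "ip z g = 0"
proof -
  obtain g' a where "g' \<in> V b k" "g = g' + smult a (b k)" using V_Suc[OF assms(3)] by blast
  thus ?thesis using assms by (simp add: ip_add2 ip_smult2)
qed

lemma V0: "g \<in> V b 0 \<Longrightarrow> g = 0" unfolding V_def by auto

lemma proj: "\<exists>y\<in>V b k. \<forall>g\<in>V b k. ip (x - y) g = 0"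
proof (induction k arbitrary: x)
  case 0
  show ?case using V_zero V0 by fastforce
next
  case (Suc k)
  obtain y where y: "y \<in> V b k" "\<forall>g\<in>V b k. ip (x - y) g = 0" using Suc by blast
  obtain yb where yb: "yb \<in> V b k" "\<forall>g\<in>V b k. ip (b k - yb) g = 0" using Suc by blast
  define u where "u = b k - yb"
  have uV: "u \<in> V b (Suc k)" unfolding u_def using V_gen V_mono[OF yb(1)] by (rule V_diff)
  have bk: "b k = u + yb" unfolding u_def by simp
  show ?case
  proof (cases "ip u u = 0")
    case True
    have "ip (x - y) (b k) = 0" unfolding bk
      using null_orth2[OF True] y yb by (simp add: ip_add2)
    thus ?thesis using V_mono[OF y(1)] orth_Suc[OF y(2)] by blast
  next
    case False
    define t where "t = ip (x - y) u / ip u u"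
    define y' where "y' = y + smult t u"
    have y'V: "y' \<in> V b (Suc k)" unfolding y'_def by (intro V_add V_mono[OF y(1)] V_smult uV)
    have o1: "\<forall>g\<in>V b k. ip (x - y') g = 0"
    proof
      fix g assume g: "g \<in> V b k"
      have "ip (x - y') g = ip (x - y) g - t * ip u g"
        unfolding y'_def by (simp add: ip_diff ip_add ip_smult algebra_simps)
      thus "ip (x - y') g = 0" using g y(2) yb(2) u_def by simp
    qed
    have "ip (x - y') u = ip (x - y) u - t * ip u u"
      unfolding y'_def by (simp add: ip_diff ip_add ip_smult algebra_simps)
    also have "\<dots> = 0" using False by (simp add: t_def)
    finally have "ip (x - y') (b k) = 0" unfolding bk using o1 yb(1) by (simp add: ip_add2)
    thus ?thesis using y'V orth_Suc[OF o1] by blast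
  qed
qed

end


context sip begin

lemma nrm_zero_iff: "nrm x = 0 \<longleftrightarrow> ip x x = 0"
  using ip_real[of x] ip_pos[of x] by (auto simp: nrm_def)

lemma pythag:
  assumes "ip w u = 0"
  shows "(nrm (w + u))^2 = (nrm w)^2 + (nrm u)^2"
proof -
  have "ip u w = 0" using assms ip_herm[of u w] by simp
  thus ?thesis using assms by (simp add: nrm_sq ip_add ip_add2)
qed

lemma bounded_map:
  assumes Fadd: "\<And>x y. F (x + y) = F x + F y"
    and Fsmult: "\<And>a x. F (smult a x) = smult a (F x)"
    and Fnull: "\<And>x. x \<in> V b k \<Longrightarrow> ip x x = 0 \<Longrightarrow> ip (F x) (F x) = 0"
  shows "\<exists>C\<ge>0. \<forall>y\<in>V b k. nrm (F y) \<le> C * nrm y"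
  using Fnull
proof (induction k)
  case 0
  have "F 0 = 0" using Fsmult[of 0 0] by simp
  hence "\<forall>y\<in>V b 0. nrm (F y) \<le> 0 * nrm y" using V0[of _ b] by (metis mult_zero_left nrm_zero_iff ip_zero order_refl)
  thus ?case by blast
next
  case (Suc k)
  have "\<And>x. x \<in> V b k \<Longrightarrow> ip x x = 0 \<Longrightarrow> ip (F x) (F x) = 0"
    using Suc.prems V_mono by blast
  then obtain C where C: "C \<ge> 0" "\<forall>y\<in>V b k. nrm (F y) \<le> C * nrm y" using Suc.IH by blast
  obtain yb where yb: "yb \<in> V b k" "\<forall>g\<in>V b k. ip (b k - yb) g = 0" using proj by blast
  define u where "u = b k - yb"
  have uV: "u \<in> V b (Suc k)" unfolding u_def using V_gen V_mono[OF yb(1)] by (rule V_diff)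
  define D where "D = (if nrm u = 0 then 0 else nrm (F u) / nrm u)"
  have D0: "D \<ge> 0" unfolding D_def using nrm_nonneg[of u] nrm_nonneg[of "F u"] by simp
  have Du: "nrm (F u) = D * nrm u"
  proof (cases "nrm u = 0")
    case True
    hence "ip (F u) (F u) = 0" using Suc.prems[OF uV] nrm_zero_iff by blast
    thus ?thesis using True nrm_zero_iff D_def by simp
  qed (simp add: D_def)
  have "\<forall>y\<in>V b (Suc k). nrm (F y) \<le> (C + D) * nrm y"
  proof
    fix y assume "y \<in> V b (Suc k)"
    then obtain y' a where y': "y' \<in> V b k" "y = y' + smult a (b k)" using V_Suc by blast
    define w where "w = y' + smult a yb"
    have wV: "w \<in> V b k" unfolding w_def by (intro V_add y'(1) V_smult yb(1))
    have yw: "y = w + smult a u" unfolding w_def u_def y'(2) by (simp add: smult_diff_right)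
    have wu: "ip w (smult a u) = 0"
      using yb(2) wV ip_herm[of w u] by (simp add: ip_smult2 u_def)
    have ny: "(nrm y)^2 = (nrm w)^2 + (cmod a * nrm u)^2"
      using pythag[OF wu] by (simp add: yw nrm_smult)
    have nw: "nrm w \<le> nrm y"
      using ny nrm_nonneg[of y] nrm_nonneg[of w]
      by (metis abs_of_nonneg le_add_same_cancel1 power2_le_iff_abs_le zero_le_power2)
    have nu: "cmod a * nrm u \<le> nrm y"
      using ny nrm_nonneg[of y] nrm_nonneg[of u]
      by (metis abs_of_nonneg le_add_same_cancel2 mult_nonneg_nonneg norm_ge_zero power2_le_iff_abs_le zero_le_power2)
    have "nrm (F y) \<le> nrm (F w) + nrm (F (smult a u))" unfolding yw Fadd by (rule nrm_triangle)
    also have "\<dots> = nrm (F w) + D * (cmod a * nrm u)" by (simp add: Fsmult nrm_smult Du)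
    also have "\<dots> \<le> C * nrm y + D * nrm y"
      using C(2) wV nw nu D0 C(1) by (intro add_mono order.trans[OF _ mult_left_mono[OF nw C(1)]] mult_left_mono) auto
    finally show "nrm (F y) \<le> (C + D) * nrm y" by (simp add: algebra_simps)
  qed
  thus ?case using C(1) D0 by (intro exI[of _ "C + D"]) auto
qed

end


lemma lin_nz: "[:- a, 1:] \<noteq> (0::complex poly)" by simp

lemma deg_linprod: "finite A \<Longrightarrow> degree (\<Prod>i\<in>A. [:- l i, 1:] :: complex poly) = card A"
  by (subst degree_prod_sum_eq) auto

lemma linprod_nz: "(\<Prod>i\<in>A. [:- l i, 1:] :: complex poly) \<noteq> 0"
proof (cases "finite A")
  case True thus ?thesis using prod_zero_iff[OF True, of "\<lambda>i. [:- l i, 1:]"] lin_nz by blast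
qed simp

lemma mod_self_add: "degree r < degree (p::complex poly) \<Longrightarrow> (p * q + r) mod p = r"
proof -
  assume "degree r < degree p"
  hence "r mod p = r" by (rule mod_poly_less)
  moreover have "(r + q * p) mod p = r mod p" by (rule mod_mult_self1)
  ultimately show ?thesis by (simp add: algebra_simps)
qed

context sip begin

lemma spectral:
  fixes l :: "nat \<Rightarrow> complex" and m :: nat
  defines "p \<equiv> (\<Prod>i<m. [:- l i, 1:])"
  assumes pd: "\<And>f. f \<noteq> 0 \<Longrightarrow> degree f < m \<Longrightarrow> ip f f \<noteq> 0"
    and iso: "\<And>f g. degree f < m \<Longrightarrow> degree g < m \<Longrightarrow>
          ip (([:0, 1:] * f) mod p) (([:0, 1:] * g) mod p) = ip f g"
  shows "\<exists>c. (\<forall>k<m. cmod (l k) = 1 \<and> c k > 0) \<and>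
             (\<forall>j. ip ((monom 1 j) mod p) 1 = (\<Sum>k<m. of_real (c k) * l k ^ j))"
proof (cases "m = 0")
  case True
  hence "p = 1" by (simp add: p_def)
  thus ?thesis using True by simp
next
  case False
  hence m1: "m \<ge> 1" by simp
  define E where "E k = (\<Prod>i\<in>{..<m} - {k}. [:- l i, 1:])" for k
  have degp: "degree p = m" unfolding p_def by (simp add: deg_linprod)
  have pnz: "p \<noteq> 0" unfolding p_def by (rule linprod_nz)
  have pE: "p = [:- l k, 1:] * E k" if "k < m" for k
    unfolding p_def E_def using that by (subst prod.remove[of _ k]) auto
  have degE: "degree (E k) = m - 1" if "k < m" for k
    unfolding E_def using that by (simp add: deg_linprod)
  have Enz: "E k \<noteq> 0" for k unfolding E_def by (rule linprod_nz)
  have XE: "([:0, 1:] * E k) mod p = smult (l k) (E k)" if k: "k < m" for k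
  proof -
    have "[:0, 1:] * E k = p * 1 + smult (l k) (E k)"
      using pE[OF k] by (simp add: algebra_simps)
    moreover have "degree (smult (l k) (E k)) < degree p"
      using degE[OF k] m1 degp by (metis degree_smult_le diff_less le_less_trans less_one not_le)
    ultimately show ?thesis using mod_self_add by metis
  qed
  have EE: "ip (E k) (E k) \<noteq> 0" if "k < m" for k
    using pd[OF Enz] degE[OF that] m1 by simp
  have unit: "cmod (l k) = 1" if k: "k < m" for k
  proof -
    have "ip (smult (l k) (E k)) (smult (l k) (E k)) = ip (E k) (E k)"
      using iso[of "E k" "E k"] degE[OF k] m1 XE[OF k] by simp
    hence "(l k * cnj (l k) - 1) * ip (E k) (E k) = 0"
      by (simp add: ip_smult ip_smult2 algebra_simps)
    hence "l k * cnj (l k) = 1" using EE[OF k] by simp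
    hence "(cmod (l k))^2 = 1" using complex_norm_square[of "l k"] by (metis of_real_eq_1_iff)
    hence "cmod (l k) = 1 \<or> cmod (l k) = -1" by (simp add: power2_eq_1_iff)
    thus ?thesis using norm_ge_zero[of "l k"] by linarith
  qed
  have lcl: "l k * cnj (l k) = 1" if "k < m" for k
    using unit[OF that] complex_norm_square[of "l k"] by simp
  have dist: "l i \<noteq> l j" if ij: "i < m" "j < m" "i \<noteq> j" for i j
  proof
    assume eq: "l i = l j"
    define F where "F = (\<Prod>t\<in>{..<m} - {i} - {j}. [:- l t, 1:])"
    have EF: "E i = [:- l i, 1:] * F"
      unfolding E_def F_def using ij eq by (subst prod.remove[of _ j]) auto
    have degF: "degree F = m - 2" unfolding F_def using ij
      by (simp add: deg_linprod card_Diff_singleton_if)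
    have m2: "m \<ge> 2" using ij by linarith
    have XF: "[:0, 1:] * F = E i + smult (l i) F" unfolding EF by (simp add: algebra_simps)
    have degXF: "degree ([:0, 1:] * F) < degree p"
    proof -
      have "degree ([:0, 1:] * F) \<le> degree [:0, 1::complex:] + degree F" by (rule degree_mult_le)
      thus ?thesis using degF degp m2 by simp
    qed
    have "ip (([:0, 1:] * F) mod p) (([:0, 1:] * E i) mod p) = ip F (E i)"
      using iso[of F "E i"] degF degE[OF ij(1)] m2 by simp
    hence "ip (E i + smult (l i) F) (smult (l i) (E i)) = ip F (E i)"
      using XE[OF ij(1)] mod_poly_less[OF degXF] XF by simp
    hence "cnj (l i) * ip (E i) (E i) + (l i * cnj (l i)) * ip F (E i) = ip F (E i)"
      by (simp add: ip_add ip_smult ip_smult2 algebra_simps)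
    hence "cnj (l i) * ip (E i) (E i) = 0" using lcl[OF ij(1)] by simp
    moreover have "cnj (l i) \<noteq> 0" using unit[OF ij(1)] by auto
    ultimately show False using EE[OF ij(1)] by simp
  qed
  have orth: "ip (E k) (E k') = 0" if kk: "k < m" "k' < m" "k \<noteq> k'" for k k'
  proof (rule ccontr)
    assume nz: "ip (E k) (E k') \<noteq> 0"
    have "ip (smult (l k) (E k)) (smult (l k') (E k')) = ip (E k) (E k')"
      using iso[of "E k" "E k'"] degE kk m1 XE by simp
    hence "(l k * cnj (l k') - 1) * ip (E k) (E k') = 0"
      by (simp add: ip_smult ip_smult2 algebra_simps)
    hence "l k * cnj (l k') = 1" using nz by simp
    hence "l k * cnj (l k') * l k' = l k'" by simp
    hence "l k = l k'" using lcl[OF kk(2)] by (simp add: mult.assoc mult.commute[of "cnj _"])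
    thus False using dist[OF kk] by simp
  qed
  have Eroot: "poly (E k) (l k') = 0" if "k < m" "k' < m" "k \<noteq> k'" for k k'
    unfolding E_def poly_prod using that by (intro prod_zero) auto
  have Eval: "poly (E k) (l k) \<noteq> 0" if "k < m" for k
    unfolding E_def poly_prod using dist[OF that] that by (auto simp: prod_zero_iff)
  have lag: "x = (\<Sum>k<m. smult (poly x (l k) / poly (E k) (l k)) (E k))" if dx: "degree x < m" for x
  proof (rule ccontr)
    define D where "D = x - (\<Sum>k<m. smult (poly x (l k) / poly (E k) (l k)) (E k))"
    assume "x \<noteq> (\<Sum>k<m. smult (poly x (l k) / poly (E k) (l k)) (E k))"
    hence Dnz: "D \<noteq> 0" unfolding D_def by simp
    have dk: "degree (smult (poly x (l k) / poly (E k) (l k)) (E k)) \<le> m - 1" if "k \<in> {..<m}" for k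
      using degree_smult_le[of "poly x (l k) / poly (E k) (l k)" "E k"] degE[of k] that by simp
    have dS: "degree (\<Sum>k<m. smult (poly x (l k) / poly (E k) (l k)) (E k)) \<le> m - 1"
      by (rule degree_sum_le[OF finite_lessThan dk])
    have "degree D \<le> max (degree x) (degree (\<Sum>k<m. smult (poly x (l k) / poly (E k) (l k)) (E k)))"
      unfolding D_def by (rule degree_diff_le_max)
    hence degD: "degree D < m" using dS dx m1 by linarith
    have rootD: "poly D (l k') = 0" if k': "k' < m" for k'
    proof -
      have "poly (\<Sum>k<m. smult (poly x (l k) / poly (E k) (l k)) (E k)) (l k')
          = (\<Sum>k<m. if k = k' then poly x (l k) else 0)"
        unfolding poly_sum
      proof (rule sum.cong[OF refl])
        fix k assume k: "k \<in> {..<m}"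
        show "poly (smult (poly x (l k) / poly (E k) (l k)) (E k)) (l k') = (if k = k' then poly x (l k) else 0)"
        proof (cases "k = k'")
          case True thus ?thesis using Eval[of k] k by simp
        next
          case False thus ?thesis using Eroot[of k k'] k k' by simp
        qed
      qed
      also have "\<dots> = poly x (l k')" using k' by simp
      finally show ?thesis unfolding D_def by simp
    qed
    have "l ` {..<m} \<subseteq> {z. poly D z = 0}" using rootD by auto
    moreover have "card (l ` {..<m}) = m"
      using dist by (subst card_image) (auto simp: inj_on_def)
    ultimately have "m \<le> card {z. poly D z = 0}"
      using card_mono[OF poly_roots_finite[OF Dnz]] by metis
    also have "\<dots> \<le> degree D" by (rule card_poly_roots_bound[OF Dnz])
    finally show False using degD by simp
  qed
  define e where "e k = poly (E k) (l k)" for k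
  define c where "c k = Re (ip (E k) (E k)) / (cmod (e k))^2" for k
  have cpos: "c k > 0" if "k < m" for k
  proof -
    have "Re (ip (E k) (E k)) \<noteq> 0" using EE[OF that] ip_real[of "E k"] by (metis of_real_0)
    hence "Re (ip (E k) (E k)) > 0" using ip_pos[of "E k"] by simp
    thus ?thesis using Eval[OF that] by (simp add: c_def e_def)
  qed
  have main: "ip ((monom 1 j) mod p) 1 = (\<Sum>k<m. of_real (c k) * l k ^ j)" for j
  proof -
    define Y where "Y = (monom 1 j) mod p"
    have degY: "degree Y < m"
      using degree_mod_less[OF pnz, of "monom 1 j"] degp m1 unfolding Y_def by fastforce
    have pl: "poly p (l k) = 0" if "k < m" for k
      unfolding p_def poly_prod using that by (intro prod_zero) auto
    have polyY: "poly Y (l k) = l k ^ j" if "k < m" for k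
    proof -
      have "monom 1 j = (monom 1 j div p) * p + Y" unfolding Y_def by simp
      hence "poly (monom 1 j) (l k) = poly Y (l k)" using pl[OF that]
        by (metis add_0 mult_zero_right poly_add poly_mult)
      thus ?thesis by (simp add: poly_monom)
    qed
    have "Y = (\<Sum>k<m. smult (poly Y (l k) / poly (E k) (l k)) (E k))" by (rule lag[OF degY])
    also have "\<dots> = (\<Sum>k<m. smult (l k ^ j / e k) (E k))"
      by (rule sum.cong[OF refl]) (simp add: polyY e_def)
    finally have Ysum: "Y = (\<Sum>k<m. smult (l k ^ j / e k) (E k))" .
    have onesum: "(1::complex poly) = (\<Sum>k<m. smult (1 / e k) (E k))"
      using lag[of 1] m1 e_def by simp
    have "ip Y 1 = (\<Sum>k<m. \<Sum>k'<m. (l k ^ j / e k) * cnj (1 / e k') * ip (E k) (E k'))"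
      apply (subst Ysum, subst onesum)
      apply (simp add: ip_sum ip_sum2 ip_smult ip_smult2 sum_distrib_left mult.assoc)
      apply (subst sum.swap)
      apply (simp add: ac_simps)
      done
    also have "\<dots> = (\<Sum>k<m. (l k ^ j / e k) * cnj (1 / e k) * ip (E k) (E k))"
    proof (rule sum.cong[OF refl])
      fix k assume "k \<in> {..<m}"
      hence "(\<Sum>k'<m. (l k ^ j / e k) * cnj (1 / e k') * ip (E k) (E k'))
           = (\<Sum>k'<m. if k' = k then (l k ^ j / e k) * cnj (1 / e k) * ip (E k) (E k) else 0)"
        using orth by (intro sum.cong refl) auto
      also have "\<dots> = (l k ^ j / e k) * cnj (1 / e k) * ip (E k) (E k)"
        using \<open>k \<in> {..<m}\<close> by simp
      finally show "(\<Sum>k'<m. (l k ^ j / e k) * cnj (1 / e k') * ip (E k) (E k'))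
           = (l k ^ j / e k) * cnj (1 / e k) * ip (E k) (E k)" .
    qed
    also have "\<dots> = (\<Sum>k<m. of_real (c k) * l k ^ j)"
    proof (rule sum.cong[OF refl])
      fix k assume k: "k \<in> {..<m}"
      have ek: "e k \<noteq> 0" using Eval k e_def by simp
      have ee: "e k * cnj (e k) = of_real ((cmod (e k))^2)" using complex_norm_square[of "e k"] by simp
      have ne: "(cmod (e k))^2 \<noteq> 0" using ek by simp
      have "(l k ^ j / e k) * cnj (1 / e k) * ip (E k) (E k) = l k ^ j * ip (E k) (E k) / (e k * cnj (e k))"
        by (simp add: complex_cnj_divide)
      also have "\<dots> = l k ^ j * of_real (Re (ip (E k) (E k))) / of_real ((cmod (e k))^2)"
        using ee ip_real[of "E k"] by simp
      also have "\<dots> = of_real (c k) * l k ^ j"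
        unfolding c_def using ne by (simp add: field_simps)
      finally show "(l k ^ j / e k) * cnj (1 / e k) * ip (E k) (E k) = of_real (c k) * l k ^ j" .
    qed
    finally show ?thesis unfolding Y_def .
  qed
  show ?thesis using unit cpos main by blast
qed

end


abbreviation "X \<equiv> [:0, 1::complex:]"
abbreviation "BM \<equiv> (\<lambda>i::nat. monom (1::complex) i)"
abbreviation "BM' \<equiv> (\<lambda>i::nat. monom (1::complex) (Suc i))"


lemma VB_coeff: "y \<in> V BM k \<Longrightarrow> i \<ge> k \<Longrightarrow> coeff y i = 0"
  unfolding V_def by (auto simp: coeff_sum)

lemma VB_intro: "(\<And>i. i \<ge> k \<Longrightarrow> coeff y i = 0) \<Longrightarrow> y \<in> V BM k"
proof -
  assume h: "\<And>i. i \<ge> k \<Longrightarrow> coeff y i = 0"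
  have "y = (\<Sum>i<k. smult (coeff y i) (monom 1 i))"
  proof (rule poly_eqI)
    fix j
    have "coeff (\<Sum>i<k. smult (coeff y i) (monom 1 i)) j = (\<Sum>i<k. coeff y i * (if i = j then 1 else 0))"
      by (simp add: coeff_sum)
    also have "\<dots> = (\<Sum>i<k. if i = j then coeff y i else 0)" by (rule sum.cong) auto
    also have "\<dots> = (if j < k then coeff y j else 0)" by (simp add: sum.delta')
    also have "\<dots> = coeff y j" using h[of j] by auto
    finally show "coeff y j = coeff (\<Sum>i<k. smult (coeff y i) (monom 1 i)) j" by simp
  qed
  thus ?thesis unfolding V_def by (intro CollectI exI[of _ "\<lambda>i. coeff y i"])
qed

lemma VB'_coeff0: "y \<in> V BM' k \<Longrightarrow> coeff y 0 = 0"
  unfolding V_def by (auto simp: coeff_sum)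

lemma VB'_coeff: "y \<in> V BM' k \<Longrightarrow> i > k \<Longrightarrow> coeff y i = 0"
  unfolding V_def by (auto simp: coeff_sum)

lemma VB'_X: "g \<in> V BM k \<Longrightarrow> X * g \<in> V BM' k"
proof -
  assume "g \<in> V BM k"
  then obtain c where "g = (\<Sum>i<k. smult (c i) (monom 1 i))" unfolding V_def by auto
  hence "X * g = (\<Sum>i<k. smult (c i) (monom 1 (Suc i)))"
    by (simp add: sum_distrib_left monom_Suc)
  thus ?thesis unfolding V_def by (intro CollectI exI[of _ c])
qed

lemma VB_deg: "y \<in> V BM k \<Longrightarrow> y \<noteq> 0 \<Longrightarrow> degree y < k"
proof -
  assume "y \<in> V BM k" "y \<noteq> 0"
  hence "coeff y (degree y) \<noteq> 0" "\<And>i. i \<ge> k \<Longrightarrow> coeff y i = 0" using VB_coeff by auto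
  thus ?thesis by (meson not_le)
qed

lemma deg_VB: "degree y < k \<Longrightarrow> y \<in> V BM k"
  by (rule VB_intro) (simp add: coeff_eq_0)

lemma monic_factor:
  fixes p :: "complex poly"
  assumes "lead_coeff p = 1"
  shows "\<exists>l. p = (\<Prod>i<degree p. [:- l i, 1:])"
proof -
  obtain l where "smult (lead_coeff p) (\<Prod>i<degree p. [:-l i, 1:]) = p"
    by (rule complex_poly_decompose')
  hence "p = (\<Prod>i<degree p. [:-l i, 1:])" using assms by simp
  thus ?thesis by blast
qed

lemma mod_X:
  fixes p f :: "complex poly"
  assumes mon: "lead_coeff p = 1" and df: "degree f < degree p"
  shows "(X * f) mod p = X * f - smult (coeff (X * f) (degree p)) p"
proof -
  define c where "c = coeff (X * f) (degree p)"
  define r where "r = X * f - smult c p"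
  have "degree (X * f) \<le> degree X + degree f" by (rule degree_mult_le)
  hence dXf: "degree (X * f) \<le> degree p" using df by simp
  have "degree r \<le> degree p" unfolding r_def
    using dXf degree_smult_le[of c p] by (meson degree_diff_le)
  moreover have cr: "coeff r (degree p) = 0" unfolding r_def c_def using mon by simp
  ultimately have dr: "degree r < degree p"
  proof -
    assume "degree r \<le> degree p" "coeff r (degree p) = 0"
    show "degree r < degree p"
    proof (rule ccontr)
      assume "\<not> degree r < degree p"
      hence "degree r = degree p" using \<open>degree r \<le> degree p\<close> by simp
      hence "r = 0" using cr by (metis leading_coeff_0_iff)
      thus False using \<open>degree r = degree p\<close> df by simp
    qed
  qed
  have e: "X * f = p * [:c:] + r" unfolding r_def by simp
  have "(X * f) mod p = r" unfolding e by (rule mod_self_add[OF dr])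
  thus ?thesis unfolding r_def c_def .
qed

locale toep = sip +
  fixes n :: nat
  assumes iso: "degree f < n \<Longrightarrow> degree g < n \<Longrightarrow> ip (X * f) (X * g) = ip f g"
begin

lemma iso_V: "f \<in> V BM n \<Longrightarrow> g \<in> V BM n \<Longrightarrow> ip (X * f) (X * g) = ip f g"
proof -
  assume f: "f \<in> V BM n" and g: "g \<in> V BM n"
  show ?thesis
  proof (cases "f = 0 \<or> g = 0")
    case True thus ?thesis by auto
  next
    case False thus ?thesis using VB_deg[OF f] VB_deg[OF g] iso by auto
  qed
qed


lemma finish:
  assumes mon: "lead_coeff p = 1" and dp: "degree p \<le> n + 1"
    and pd: "\<And>f. f \<noteq> 0 \<Longrightarrow> degree f < degree p \<Longrightarrow> ip f f \<noteq> 0"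
    and U: "\<And>f g. degree f < degree p \<Longrightarrow> degree g < degree p \<Longrightarrow>
            ip ((X * f) mod p) ((X * g) mod p) = ip f g"
    and mom: "\<And>j. j \<le> n \<Longrightarrow> ip (monom 1 j) 1 = ip (monom 1 j mod p) 1"
  shows "\<exists>N l c. N \<le> n + 1 \<and> (\<forall>k<N. cmod (l k) = 1 \<and> (c k :: real) > 0) \<and>
            (\<forall>j\<le>n. ip (monom 1 j) 1 = (\<Sum>k<N. of_real (c k) * l k ^ j))"
proof -
  obtain l where pl: "p = (\<Prod>i<degree p. [:- l i, 1:])" using monic_factor[OF mon] by blast
  have P: "(\<Prod>i<degree p. [:- l i, 1:]) = p" using pl by (rule sym)
  obtain c where c: "\<forall>k<degree p. cmod (l k) = 1 \<and> c k > 0"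
    "\<forall>j. ip ((monom 1 j) mod p) 1 = (\<Sum>k<degree p. of_real (c k) * l k ^ j)"
    using spectral[of "degree p" l, unfolded P] pd U by blast
  show ?thesis using c mom dp by (intro exI[of _ "degree p"] exI[of _ l] exI[of _ c]) auto
qed

lemma null_add: "ip u u = 0 \<Longrightarrow> ip v v = 0 \<Longrightarrow> ip (u + v) (u + v) = 0"
  using null_orth[of u v] null_orth[of v u] by (simp add: ip_add ip_add2)

lemma null_mult:
  assumes p0: "ip p p = 0"
  shows "degree (p * h) \<le> n \<Longrightarrow> ip (p * h) (p * h) = 0"
proof (induction h)
  case (pCons a h)
  show ?case
  proof (cases "p = 0 \<or> h = 0")
    case True thus ?thesis using p0 by (auto simp: ip_smult ip_smult2)
  next
    case False
    hence "degree (p * pCons a h) = degree p + Suc (degree h)" by (simp add: degree_mult_eq del: mult_pCons_right)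
    moreover have "degree (p * h) = degree p + degree h" using False by (simp add: degree_mult_eq)
    ultimately have dh: "degree (p * h) < n" using pCons.prems by simp
    hence "ip (p * h) (p * h) = 0" using pCons.IH by simp
    hence n1: "ip (X * (p * h)) (X * (p * h)) = 0" using iso[OF dh dh] by simp
    have n2: "ip (smult a p) (smult a p) = 0" using p0 by (simp add: ip_smult ip_smult2)
    have "p * pCons a h = smult a p + X * (p * h)" by simp
    thus ?thesis using null_add[OF n2 n1] by simp
  qed
qed simp

lemma mom_mod:
  assumes p0: "ip p p = 0" and pnz: "p \<noteq> 0" and dp: "degree p \<le> n" and j: "j \<le> n"
  shows "ip (monom 1 j) 1 = ip (monom 1 j mod p) 1"
proof -
  define x where "x = (monom 1 j :: complex poly)"
  have "degree (x mod p) \<le> n" using degree_mod_less[OF pnz, of x] dp by auto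
  moreover have "degree x \<le> n" using j by (simp add: x_def degree_monom_le order.trans[OF degree_monom_le])
  ultimately have "degree (x - x mod p) \<le> n" by (meson degree_diff_le)
  moreover have "x - x mod p = p * (x div p)" by (simp add: minus_mod_eq_mult_div)
  ultimately have "ip (p * (x div p)) (p * (x div p)) = 0" using null_mult[OF p0] by simp
  hence "ip (p * (x div p)) 1 = 0" by (rule null_orth)
  moreover have "x = p * (x div p) + x mod p" by simp
  ultimately have "ip x 1 = ip (x mod p) 1" by (metis add_0 ip_add)
  thus ?thesis by (simp add: x_def)
qed


lemma caseA:
  assumes q: "lead_coeff q = 1" "degree q \<le> n" "ip q q = 0"
  shows "\<exists>N l c. N \<le> n + 1 \<and> (\<forall>k<N. cmod (l k) = 1 \<and> (c k :: real) > 0) \<and>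
            (\<forall>j\<le>n. ip (monom 1 j) 1 = (\<Sum>k<N. of_real (c k) * l k ^ j))"
proof -
  define P where "P k = (\<exists>q. lead_coeff q = 1 \<and> degree q = k \<and> ip q q = 0)" for k
  define m where "m = (LEAST k. P k)"
  have Pq: "P (degree q)" unfolding P_def using q by blast
  hence "P m" unfolding m_def by (rule LeastI)
  then obtain p where p: "lead_coeff p = 1" "degree p = m" "ip p p = 0" unfolding P_def by blast
  have mq: "m \<le> degree q" unfolding m_def using Pq by (rule Least_le)
  have pnz: "p \<noteq> 0" using p(1) by auto
  have p1: "ip p y = 0" for y by (rule null_orth[OF p(3)])
  have p2: "ip y p = 0" for y by (rule null_orth2[OF p(3)])
  have pd: "ip f f \<noteq> 0" if f: "f \<noteq> 0" "degree f < degree p" for f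
  proof
    assume f0: "ip f f = 0"
    define g where "g = smult (inverse (lead_coeff f)) f"
    have "lead_coeff g = 1" using f by (simp add: g_def)
    moreover have "degree g = degree f" using f by (simp add: g_def)
    moreover have "ip g g = 0" using f0 by (simp add: g_def ip_smult ip_smult2)
    ultimately have "P (degree f)" unfolding P_def by blast
    hence "m \<le> degree f" unfolding m_def by (rule Least_le)
    thus False using f p(2) by simp
  qed
  have U: "ip ((X * f) mod p) ((X * g) mod p) = ip f g"
    if fg: "degree f < degree p" "degree g < degree p" for f g
  proof -
    have "ip ((X * f) mod p) ((X * g) mod p) = ip (X * f) (X * g)"
      unfolding mod_X[OF p(1) fg(1)] mod_X[OF p(1) fg(2)]
      by (simp add: ip_diff ip_diff2 ip_smult ip_smult2 p1 p2)
    also have "\<dots> = ip f g" using fg p(2) mq q(2) by (intro iso) auto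
    finally show ?thesis .
  qed
  have mom: "ip (monom 1 j) 1 = ip (monom 1 j mod p) 1" if "j \<le> n" for j
    using mom_mod[OF p(3) pnz _ that] p(2) mq q(2) by simp
  show ?thesis using finish[OF p(1) _ pd U mom] p(2) mq q(2) by simp
qed


lemma caseB:
  assumes nonull: "\<And>q. lead_coeff q = 1 \<Longrightarrow> degree q \<le> n \<Longrightarrow> ip q q \<noteq> 0"
  shows "\<exists>N l c. N \<le> n + 1 \<and> (\<forall>k<N. cmod (l k) = 1 \<and> (c k :: real) > 0) \<and>
            (\<forall>j\<le>n. ip (monom 1 j) 1 = (\<Sum>k<N. of_real (c k) * l k ^ j))"
proof -
  have pd: "ip f f \<noteq> 0" if f: "f \<noteq> 0" "degree f \<le> n" for f
  proof
    assume f0: "ip f f = 0"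
    define g where "g = smult (inverse (lead_coeff f)) f"
    have "lead_coeff g = 1" using f by (simp add: g_def)
    moreover have "degree g \<le> n" using f by (simp add: g_def)
    moreover have "ip g g = 0" using f0 by (simp add: g_def ip_smult ip_smult2)
    ultimately show False using nonull by blast
  qed
  define W where "W = (monom 1 n :: complex poly)"
  obtain a where a: "a \<in> V BM n" "\<forall>g\<in>V BM n. ip (W - a) g = 0" using proj by blast
  obtain b where b: "b \<in> V BM' n" "\<forall>g\<in>V BM' n. ip (1 - b) g = 0" using proj by blast
  define v where "v = 1 - b"
  have "coeff v 0 = 1" unfolding v_def using VB'_coeff0[OF b(1)] by simp
  hence vnz: "v \<noteq> 0" by auto
  have "degree b \<le> n" using VB'_coeff[OF b(1)] by (intro degree_le) auto
  hence dv: "degree v \<le> n" unfolding v_def by (metis degree_1 degree_diff_le le0)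
  have vv: "Re (ip v v) > 0"
    using pd[OF vnz dv] ip_pos[of v] ip_real[of v] by (metis less_eq_real_def of_real_0)
  have Wa: "ip (W - a) a = 0" using a by blast
  have aW: "ip a (W - a) = 0" using Wa ip_herm[of a "W - a"] by simp
  have "ip W W = ip (a + (W - a)) (a + (W - a))" by simp
  also have "\<dots> = ip a a + ip (W - a) (W - a)" using Wa aW by (simp only: ip_add ip_add2) simp
  finally have WW: "Re (ip W W) = Re (ip a a) + Re (ip (W - a) (W - a))" by simp
  hence aW_le: "Re (ip a a) \<le> Re (ip W W)" using ip_pos[of "W - a"] by simp
  define t where "t = sqrt ((Re (ip W W) - Re (ip a a)) / Re (ip v v))"
  have tt: "t * t * Re (ip v v) = Re (ip W W) - Re (ip a a)"
    using aW_le vv unfolding t_def by (simp add: real_sqrt_mult_self)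
  define r where "r = X * a + smult (of_real t) v"
  have Xa: "X * a \<in> V BM' n" by (rule VB'_X[OF a(1)])
  have vXg: "ip v (X * g) = 0" if "g \<in> V BM n" for g using b(2) VB'_X[OF that] v_def by simp
  have r1: "ip r (X * g) = ip W g" if g: "g \<in> V BM n" for g
  proof -
    have "ip r (X * g) = ip (X * a) (X * g) + of_real t * ip v (X * g)"
      unfolding r_def by (simp add: ip_add ip_smult)
    also have "\<dots> = ip a g" using iso_V[OF a(1) g] vXg[OF g] by simp
    also have "\<dots> = ip W g" using a(2) g by (simp add: ip_diff)
    finally show ?thesis .
  qed
  have r2: "ip r r = ip W W"
  proof -
    have va: "ip v (X * a) = 0" by (rule vXg[OF a(1)])
    have av: "ip (X * a) v = 0" using va ip_herm[of "X * a" v] by simp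
    obtain RV where RV: "ip v v = of_real RV" "RV = Re (ip v v)" using ip_real[of v] by blast
    obtain RW where RW: "ip W W = of_real RW" "RW = Re (ip W W)" using ip_real[of W] by blast
    obtain RA where RA: "ip a a = of_real RA" "RA = Re (ip a a)" using ip_real[of a] by blast
    have "ip r r = ip (X * a) (X * a) + of_real (t * t) * ip v v"
      unfolding r_def using va av by (simp add: ip_add ip_add2 ip_smult ip_smult2)
    also have "\<dots> = of_real RA + of_real (t * t * RV)"
      using iso_V[OF a(1) a(1)] RA(1) RV(1) by simp
    also have "t * t * RV = RW - RA" using tt RV(2) RW(2) RA(2) by simp
    also have "of_real RA + complex_of_real (RW - RA) = ip W W" using RW(1) by simp
    finally show ?thesis .
  qed
  have dXa: "degree (X * a) \<le> n" using VB'_coeff[OF Xa] by (intro degree_le) auto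
  have dr: "degree r \<le> n" unfolding r_def
    using dXa dv degree_smult_le[of "of_real t" v] by (meson degree_add_le order.trans)
  define p where "p = monom 1 (Suc n) - r"
  have cp: "coeff p (Suc n) = 1" unfolding p_def using dr by (simp add: coeff_eq_0)
  have dp: "degree p = Suc n"
  proof (rule antisym)
    show "degree p \<le> Suc n" unfolding p_def using dr
      by (intro degree_le) (auto simp: coeff_eq_0)
    show "Suc n \<le> degree p" using cp by (intro le_degree) simp
  qed
  have mon: "lead_coeff p = 1" using cp dp by simp
  have U: "ip ((X * f) mod p) ((X * g) mod p) = ip f g"
    if fg: "degree f < degree p" "degree g < degree p" for f g
  proof -
    have Ueq: "(X * h) mod p = X * (h - smult (coeff h n) W) + smult (coeff h n) r \<and>
               h - smult (coeff h n) W \<in> V BM n" if dh: "degree h < degree p" for h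
    proof -
      define c where "c = coeff h n"
      define h' where "h' = h - smult c W"
      have h'V: "h' \<in> V BM n"
      proof (rule VB_intro)
        fix i assume i: "i \<ge> n"
        show "coeff h' i = 0"
        proof (cases "i = n")
          case True thus ?thesis by (simp add: h'_def c_def W_def)
        next
          case False
          hence "i > degree h" using i dh dp by simp
          thus ?thesis using False by (simp add: h'_def W_def coeff_eq_0)
        qed
      qed
      have dUh: "degree (X * h' + smult c r) < degree p"
      proof -
        have "degree (X * h') \<le> n" using VB'_coeff[OF VB'_X[OF h'V]] by (intro degree_le) auto
        moreover have "degree (smult c r) \<le> n" using dr degree_smult_le[of c r] by simp
        ultimately have "degree (X * h' + smult c r) \<le> n" by (rule degree_add_le)
        thus ?thesis using dp by simp
      qed
      have XW: "X * W = monom 1 (Suc n)" unfolding W_def by (simp add: monom_Suc)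
      have e1: "p * [:c:] = smult c (monom 1 (Suc n)) - smult c r"
        unfolding p_def by (simp add: smult_diff_right)
      have e2: "X * h' = X * h - smult c (monom 1 (Suc n))"
        unfolding h'_def by (simp only: right_diff_distrib mult_smult_right XW)
      have e: "X * h = p * [:c:] + (X * h' + smult c r)"
        unfolding e1 e2 by simp
      have "(X * h) mod p = X * h' + smult c r" unfolding e by (rule mod_self_add[OF dUh])
      thus ?thesis using h'V unfolding h'_def c_def by simp
    qed
    define f' where "f' = f - smult (coeff f n) W"
    define g' where "g' = g - smult (coeff g n) W"
    define cf where "cf = coeff f n"
    define cg where "cg = coeff g n"
    have f'V: "f' \<in> V BM n" and g'V: "g' \<in> V BM n" using Ueq fg f'_def g'_def by auto
    have f'r: "ip (X * f') r = ip f' W" using r1[OF f'V] ip_herm[of "X * f'" r] ip_herm[of f' W] by simp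
    have "ip ((X * f) mod p) ((X * g) mod p) = ip (X * f' + smult cf r) (X * g' + smult cg r)"
      using Ueq[OF fg(1)] Ueq[OF fg(2)] f'_def g'_def cf_def cg_def by simp
    also have "\<dots> = ip (X * f') (X * g') + cnj cg * ip (X * f') r + cf * ip r (X * g') + cf * cnj cg * ip r r"
      by (simp add: ip_add ip_add2 ip_smult ip_smult2 algebra_simps)
    also have "\<dots> = ip f' g' + cnj cg * ip f' W + cf * ip W g' + cf * cnj cg * ip W W"
      using iso_V[OF f'V g'V] f'r r1[OF g'V] r2 by simp
    also have "\<dots> = ip (f' + smult cf W) (g' + smult cg W)"
      by (simp add: ip_add ip_add2 ip_smult ip_smult2 algebra_simps)
    also have "\<dots> = ip f g" by (simp add: f'_def g'_def cf_def cg_def)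
    finally show ?thesis .
  qed
  have pd': "ip f f \<noteq> 0" if "f \<noteq> 0" "degree f < degree p" for f
    using pd that dp by simp
  have mom: "ip (monom 1 j) 1 = ip (monom 1 j mod p) 1" if "j \<le> n" for j
  proof -
    have "degree (monom 1 j :: complex poly) < degree p" using that dp by (simp add: degree_monom_eq)
    thus ?thesis by (simp add: mod_poly_less)
  qed
  show ?thesis using finish[OF mon _ pd' U mom] dp by simp
qed

theorem toep_quad:
  "\<exists>N l c. N \<le> n + 1 \<and> (\<forall>k<N. cmod (l k) = 1 \<and> (c k :: real) > 0) \<and>
            (\<forall>j\<le>n. ip (monom 1 j) 1 = (\<Sum>k<N. of_real (c k) * l k ^ j))"
proof (cases "\<exists>q. lead_coeff q = 1 \<and> degree q \<le> n \<and> ip q q = 0")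
  case True thus ?thesis using caseA by blast
next
  case False thus ?thesis using caseB by blast
qed

end


definition tr :: "nat \<Rightarrow> complex poly \<Rightarrow> complex poly" where
  "tr N f = (\<Sum>i\<le>N. monom (coeff f i) i)"

lemma coeff_tr: "coeff (tr N f) j = (if j \<le> N then coeff f j else 0)"
  unfolding tr_def by (simp add: coeff_sum)

lemma tr_add: "tr N (f + g) = tr N f + tr N g"
  by (rule poly_eqI) (simp add: coeff_tr)

lemma tr_smult: "tr N (smult a f) = smult a (tr N f)"
  by (rule poly_eqI) (simp add: coeff_tr)

lemma tr_id: "degree f \<le> N \<Longrightarrow> tr N f = f"
  by (rule poly_eqI) (auto simp: coeff_tr coeff_eq_0)

lemma deg_tr: "degree (tr N f) \<le> N"
  by (rule degree_le) (simp add: coeff_tr)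

locale Lctx =
  fixes d :: nat and L :: "zpoly \<Rightarrow> complex"
  assumes lin: "lin_functional_on (tot_deg_le (2 * d + 2)) L"
    and real: "real_functional_on (tot_deg_le (2 * d + 2)) L"
    and pos: "\<And>f. degree f \<le> d + 1 \<Longrightarrow> L (herm f f) \<in> \<real> \<and> 0 \<le> Re (L (herm f f))"
    and welldef: "\<And>p. degree p \<le> d \<Longrightarrow> L (herm p p) = 0 \<Longrightarrow>
                     L (herm ([:0, 1:] * p) ([:0, 1:] * p)) = 0"
begin

definition ipL :: "complex poly \<Rightarrow> complex poly \<Rightarrow> complex" where
  "ipL f g = L (herm (tr (d + 1) f) (tr (d + 1) g))"

lemma herm_tot: "degree f \<le> d + 1 \<Longrightarrow> degree g \<le> d + 1 \<Longrightarrow> herm f g \<in> tot_deg_le (2 * d + 2)"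
proof -
  assume f: "degree f \<le> d + 1" and g: "degree g \<le> d + 1"
  have "coeff f j * cnj (coeff g k) = 0" if "2 * d + 2 < j + k" for j k
  proof (cases "d + 1 < j")
    case True thus ?thesis using f by (simp add: coeff_eq_0)
  next
    case False hence "d + 1 < k" using that by linarith
    thus ?thesis using g by (simp add: coeff_eq_0)
  qed
  thus ?thesis unfolding tot_deg_le_def herm_def by blast
qed

lemma L_add: "c \<in> tot_deg_le (2 * d + 2) \<Longrightarrow> c' \<in> tot_deg_le (2 * d + 2) \<Longrightarrow>
    L (\<lambda>j k. c j k + c' j k) = L c + L c'"
  using lin unfolding lin_functional_on_def by blast

lemma L_smult: "c \<in> tot_deg_le (2 * d + 2) \<Longrightarrow> L (\<lambda>j k. a * c j k) = a * L c"
  using lin unfolding lin_functional_on_def by blast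

lemma zero_tot: "(\<lambda>_ _. 0) \<in> tot_deg_le (2 * d + 2)"
  unfolding tot_deg_le_def by simp

lemma L_zero: "L (\<lambda>_ _. 0) = 0"
  using L_smult[OF zero_tot, of 0] by simp

lemma ipL_herm: "degree f \<le> d + 1 \<Longrightarrow> degree g \<le> d + 1 \<Longrightarrow> ipL f g = L (herm f g)"
  unfolding ipL_def by (simp add: tr_id)

sublocale S: sip ipL
proof
  fix f g h :: "complex poly" and a :: complex
  show "ipL (f + g) h = ipL f h + ipL g h"
  proof -
    have "herm (tr (d + 1) (f + g)) (tr (d + 1) h) =
          (\<lambda>j k. herm (tr (d + 1) f) (tr (d + 1) h) j k + herm (tr (d + 1) g) (tr (d + 1) h) j k)"
      by (simp add: herm_def tr_add algebra_simps)
    thus ?thesis unfolding ipL_def using L_add herm_tot deg_tr by simp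
  qed
  show "ipL (smult a f) g = a * ipL f g"
  proof -
    have "herm (tr (d + 1) (smult a f)) (tr (d + 1) g) = (\<lambda>j k. a * herm (tr (d + 1) f) (tr (d + 1) g) j k)"
      by (simp add: herm_def tr_smult algebra_simps)
    thus ?thesis unfolding ipL_def using L_smult herm_tot deg_tr by simp
  qed
  show "ipL g f = cnj (ipL f g)"
  proof -
    have "herm (tr (d + 1) g) (tr (d + 1) f) = zp_conj (herm (tr (d + 1) f) (tr (d + 1) g))"
      by (simp add: herm_def zp_conj_def fun_eq_iff mult.commute)
    thus ?thesis unfolding ipL_def using real herm_tot deg_tr unfolding real_functional_on_def by simp
  qed
  show "0 \<le> Re (ipL f f)" unfolding ipL_def using pos deg_tr by simp
qed

lemma Lnorm_nrm: "degree p \<le> d + 1 \<Longrightarrow> Lnorm L p = S.nrm p"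
  unfolding Lnorm_def S.nrm_def by (simp add: ipL_herm)

lemma Xnull: "y \<in> V BM (d + 1) \<Longrightarrow> ipL y y = 0 \<Longrightarrow> ipL (X * y) (X * y) = 0"
proof -
  assume y: "y \<in> V BM (d + 1)" and y0: "ipL y y = 0"
  have dy: "degree y \<le> d" using VB_deg[OF y] by (cases "y = 0") auto
  hence "L (herm y y) = 0" using y0 ipL_herm by simp
  hence "L (herm (X * y) (X * y)) = 0" using welldef[OF dy] by simp
  moreover have "degree (X * y) \<le> d + 1"
    using dy degree_mult_le[of X y] by simp
  ultimately show ?thesis using ipL_herm by simp
qed

lemma Xbound: "\<exists>C\<ge>0. \<forall>y\<in>V BM (d + 1). S.nrm (X * y) \<le> C * S.nrm y"
  by (rule S.bounded_map[OF _ _ Xnull]) (simp_all add: algebra_simps)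


definition SR where "SR = {Lnorm L q | p q. degree p \<le> d \<and> Lnorm L p \<le> 1 \<and> proj_rep L d ([:0, 1:] * p) q}"

lemma herm0: "herm 0 g = (\<lambda>_ _. 0)" by (simp add: herm_def fun_eq_iff)

lemma SR_bdd: "bdd_above SR"
proof -
  obtain C where C: "C \<ge> 0" "\<forall>y\<in>V BM (d + 1). S.nrm (X * y) \<le> C * S.nrm y" using Xbound by blast
  have "x \<le> C" if "x \<in> SR" for x
  proof -
    obtain p q where pq: "x = Lnorm L q" "degree p \<le> d" "Lnorm L p \<le> 1" "proj_rep L d (X * p) q"
      using \<open>x \<in> SR\<close> unfolding SR_def by blast
    have dq: "degree q \<le> d" using pq(4) unfolding proj_rep_def by blast
    have dXp: "degree (X * p) \<le> d + 1" using pq(2) degree_mult_le[of X p] by simp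
    have dd: "degree (X * p - q) \<le> d + 1" by (intro degree_diff_le dXp) (use dq in simp)
    have "L (herm (X * p - q) q) = 0" using pq(4) dq unfolding proj_rep_def by blast
    hence o1: "ipL (X * p - q) q = 0" using ipL_herm dd dq by simp
    have o2: "ipL q (X * p - q) = 0" using o1 S.ip_herm[of q "X * p - q"] by simp
    have "(S.nrm (q + (X * p - q)))^2 = (S.nrm q)^2 + (S.nrm (X * p - q))^2" by (rule S.pythag[OF o2])
    hence "(S.nrm q)^2 \<le> (S.nrm (X * p))^2" using S.nrm_nonneg[of "X * p - q"] by simp
    hence nq: "S.nrm q \<le> S.nrm (X * p)" using S.nrm_nonneg[of q] S.nrm_nonneg[of "X * p"]
      by (simp add: power2_le_iff_abs_le)
    have "p \<in> V BM (d + 1)" using pq(2) by (intro deg_VB) simp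
    hence "S.nrm (X * p) \<le> C * S.nrm p" using C by blast
    also have "\<dots> \<le> C * 1" using pq(2,3) Lnorm_nrm C(1) by (intro mult_left_mono) auto
    finally show ?thesis using nq pq(1) Lnorm_nrm dq by simp
  qed
  thus ?thesis unfolding bdd_above_def by blast
qed

lemma zero_SR: "0 \<in> SR"
proof -
  have L0: "Lnorm L 0 = 0" unfolding Lnorm_def herm0 L_zero by simp
  have "proj_rep L d (X * 0) 0" unfolding proj_rep_def herm0 by (simp add: herm0 L_zero)
  hence "0 = Lnorm L 0 \<and> degree (0::complex poly) \<le> d \<and> Lnorm L 0 \<le> 1 \<and> proj_rep L d (X * 0) 0"
    using L0 by simp
  thus ?thesis unfolding SR_def by blast
qed

lemma R_nonneg: "0 \<le> Md_norm L d"
  unfolding Md_norm_def using cSup_upper[OF zero_SR SR_bdd] unfolding SR_def by simp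

lemma Rbound: "y \<in> V BM d \<Longrightarrow> S.nrm (X * y) \<le> Md_norm L d * S.nrm y"
proof -
  assume y: "y \<in> V BM d"
  have dy: "degree (X * y) \<le> d"
    using VB'_coeff[OF VB'_X[OF y]] by (intro degree_le) auto
  have y1: "y \<in> V BM (d + 1)" using y V_mono by simp
  have dy1: "degree y \<le> d" using VB_deg[OF y] by (cases "y = 0") auto
  show ?thesis
  proof (cases "S.nrm y = 0")
    case True
    hence "ipL (X * y) (X * y) = 0" using Xnull[OF y1] S.nrm_zero_iff by blast
    hence "S.nrm (X * y) = 0" using S.nrm_zero_iff by blast
    thus ?thesis using True by simp
  next
    case False
    hence ny: "S.nrm y > 0" using S.nrm_nonneg[of y] by simp
    define p where "p = smult (of_real (1 / S.nrm y)) y"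
    have np: "S.nrm p = 1" unfolding p_def using ny by (simp add: S.nrm_smult norm_divide)
    have dp: "degree p \<le> d" unfolding p_def using dy1 by simp
    have "degree (X * p) \<le> degree (X * y)" unfolding p_def by (metis degree_smult_le mult_smult_right)
    hence dXp: "degree (X * p) \<le> d" using dy by simp
    have "proj_rep L d (X * p) (X * p)" unfolding proj_rep_def using dXp by (simp add: herm0 L_zero)
    hence "Lnorm L (X * p) \<in> SR" unfolding SR_def using dp np Lnorm_nrm by fastforce
    hence "Lnorm L (X * p) \<le> Md_norm L d" unfolding Md_norm_def SR_def[symmetric]
      using SR_bdd by (rule cSup_upper)
    hence "S.nrm (X * p) \<le> Md_norm L d" using Lnorm_nrm dXp by simp
    moreover have "S.nrm (X * p) = S.nrm (X * y) / S.nrm y"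
    proof -
      have "X * p = smult (of_real (1 / S.nrm y)) (X * y)" unfolding p_def by (rule mult_smult_right)
      hence "S.nrm (X * p) = cmod (of_real (1 / S.nrm y)) * S.nrm (X * y)" by (simp only: S.nrm_smult)
      moreover have "cmod (of_real (1 / S.nrm y) :: complex) = 1 / S.nrm y"
        using ny by (simp only: norm_of_real) simp
      ultimately show ?thesis by simp
    qed
    ultimately have "S.nrm (X * y) = S.nrm y * S.nrm (X * p)" and nXp: "S.nrm (X * p) \<le> Md_norm L d"
      using ny by (simp_all add: field_simps)
    hence "S.nrm (X * y) \<le> S.nrm y * Md_norm L d" using ny by (simp add: mult_left_mono)
    thus ?thesis by (simp add: mult.commute)
  qed
qed

end


locale Tctx = Lctx +
  assumes Rpos: "Md_norm L d > 0"
begin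

abbreviation "Rr \<equiv> Md_norm L d"

definition mm where "mm j = ipL (monom 1 j) 1"
definition s where "s j = mm j / of_real (Rr ^ j)"
definition sg where "sg i j = (if j \<le> i then s (i - j) else cnj (s (j - i)))"
definition zeta where "zeta = smult (of_real (1 / Rr)) X"

lemma s0: "s 0 = ipL 1 1" by (simp add: s_def mm_def)

lemma s0_real: "cnj (s 0) = s 0"
  using S.ip_herm[of 1 1] s0 by simp

lemma sg_herm: "sg j i = cnj (sg i j)"
  using s0_real by (auto simp: sg_def)

lemma zeta_pow: "zeta ^ m = smult (of_real ((1 / Rr) ^ m)) (monom 1 m)"
  unfolding zeta_def smult_power by (simp add: monom_altdef)

lemma ip_zeta_pow: "m \<le> d \<Longrightarrow> ipL (zeta ^ m) 1 = s m"
  unfolding zeta_pow S.ip_smult s_def mm_def by (simp add: power_divide field_simps)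

lemma deg_zeta_pow: "degree (zeta ^ m) \<le> m"
  unfolding zeta_pow by (simp add: degree_monom_le order.trans[OF degree_smult_le])

context
  fixes a :: "nat \<Rightarrow> complex"
begin

definition yy where "yy k = (\<Sum>j\<le>k. smult (cnj (a j)) (zeta ^ (k - j)))"
definition Q where "Q k = (\<Sum>i\<le>k. \<Sum>j\<le>k. a i * cnj (a j) * sg i j)"

lemma yy_Suc: "yy (Suc k) = zeta * yy k + smult (cnj (a (Suc k))) 1"
proof -
  have "zeta * yy k = (\<Sum>j\<le>k. smult (cnj (a j)) (zeta ^ (Suc k - j)))"
    unfolding yy_def sum_distrib_left
    by (intro sum.cong refl) (simp add: Suc_diff_le mult_smult_right)
  thus ?thesis unfolding yy_def by simp
qed

lemma zeta_yy: "zeta * yy k = (\<Sum>j\<le>k. smult (cnj (a j)) (zeta ^ (Suc k - j)))"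
  unfolding yy_def sum_distrib_left
  by (intro sum.cong refl) (simp add: Suc_diff_le mult_smult_right)

lemma ip_zeta_yy: "k < d \<Longrightarrow> ipL (zeta * yy k) 1 = (\<Sum>j\<le>k. cnj (a j) * s (Suc k - j))"
  unfolding zeta_yy S.ip_sum S.ip_smult
  by (intro sum.cong refl) (simp add: ip_zeta_pow)

lemma deg_yy: "degree (yy k) \<le> k"
  unfolding yy_def
  by (intro degree_sum_le) (auto intro: order.trans[OF degree_smult_le] order.trans[OF deg_zeta_pow])

lemma Q_Suc: "Q (Suc k) = Q k + (\<Sum>j\<le>k. a (Suc k) * cnj (a j) * s (Suc k - j))
    + (\<Sum>i\<le>k. a i * cnj (a (Suc k)) * cnj (s (Suc k - i))) + a (Suc k) * cnj (a (Suc k)) * s 0"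
proof -
  have "Q (Suc k) = (\<Sum>i\<le>Suc k. (\<Sum>j\<le>k. a i * cnj (a j) * sg i j) + a i * cnj (a (Suc k)) * sg i (Suc k))"
    unfolding Q_def by simp
  also have "\<dots> = (\<Sum>i\<le>k. (\<Sum>j\<le>k. a i * cnj (a j) * sg i j) + a i * cnj (a (Suc k)) * sg i (Suc k))
       + ((\<Sum>j\<le>k. a (Suc k) * cnj (a j) * sg (Suc k) j) + a (Suc k) * cnj (a (Suc k)) * sg (Suc k) (Suc k))"
    by simp
  also have "\<dots> = Q k + (\<Sum>i\<le>k. a i * cnj (a (Suc k)) * sg i (Suc k))
       + (\<Sum>j\<le>k. a (Suc k) * cnj (a j) * sg (Suc k) j) + a (Suc k) * cnj (a (Suc k)) * sg (Suc k) (Suc k)"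
    unfolding Q_def sum.distrib by (simp add: algebra_simps)
  also have "(\<Sum>i\<le>k. a i * cnj (a (Suc k)) * sg i (Suc k)) = (\<Sum>i\<le>k. a i * cnj (a (Suc k)) * cnj (s (Suc k - i)))"
    by (intro sum.cong refl) (auto simp: sg_def)
  also have "(\<Sum>j\<le>k. a (Suc k) * cnj (a j) * sg (Suc k) j) = (\<Sum>j\<le>k. a (Suc k) * cnj (a j) * s (Suc k - j))"
    by (intro sum.cong refl) (auto simp: sg_def)
  also have "sg (Suc k) (Suc k) = s 0" by (simp add: sg_def)
  finally show ?thesis by (simp add: algebra_simps)
qed

lemma ip_yy_Suc: "k < d \<Longrightarrow> ipL (yy (Suc k)) (yy (Suc k)) = ipL (zeta * yy k) (zeta * yy k)
   + a (Suc k) * (\<Sum>j\<le>k. cnj (a j) * s (Suc k - j))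
   + cnj (a (Suc k)) * cnj (\<Sum>j\<le>k. cnj (a j) * s (Suc k - j))
   + cnj (a (Suc k)) * a (Suc k) * s 0"
proof -
  assume k: "k < d"
  define u where "u = zeta * yy k"
  define b where "b = cnj (a (Suc k))"
  have "ipL (yy (Suc k)) (yy (Suc k)) = ipL (u + smult b 1) (u + smult b 1)"
    unfolding yy_Suc u_def b_def by simp
  also have "\<dots> = ipL u u + cnj b * ipL u 1 + b * ipL 1 u + b * cnj b * ipL 1 1"
    by (simp only: S.ip_add S.ip_add2 S.ip_smult S.ip_smult2) (simp add: algebra_simps)
  also have "ipL 1 u = cnj (ipL u 1)" by (rule S.ip_herm)
  also have "ipL u 1 = (\<Sum>j\<le>k. cnj (a j) * s (Suc k - j))" unfolding u_def by (rule ip_zeta_yy[OF k])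
  finally show ?thesis unfolding u_def b_def s0 by (simp add: algebra_simps)
qed

lemma tele: "k \<le> d \<Longrightarrow> Q k = ipL (yy k) (yy k) + (\<Sum>l<k. ipL (yy l) (yy l) - ipL (zeta * yy l) (zeta * yy l))"
proof (induction k)
  case 0
  have "yy 0 = smult (cnj (a 0)) 1" by (simp add: yy_def)
  hence "ipL (yy 0) (yy 0) = cnj (a 0) * a 0 * s 0"
    by (simp only: S.ip_smult S.ip_smult2 s0) (simp add: algebra_simps)
  thus ?case by (simp add: Q_def sg_def)
next
  case (Suc k)
  hence k: "k < d" by simp
  have "Q (Suc k) = Q k + (ipL (yy (Suc k)) (yy (Suc k)) - ipL (zeta * yy k) (zeta * yy k))"
    unfolding Q_Suc ip_yy_Suc[OF k] by (simp add: sum_distrib_left algebra_simps)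
  thus ?case using Suc.IH k by simp
qed

lemma contr: "l < d \<Longrightarrow> Re (ipL (zeta * yy l) (zeta * yy l)) \<le> Re (ipL (yy l) (yy l))"
proof -
  assume l: "l < d"
  have yV: "yy l \<in> V BM d" using deg_yy[of l] l by (intro deg_VB) simp
  have "zeta * yy l = smult (of_real (1 / Rr)) (X * yy l)" unfolding zeta_def by (rule mult_smult_left)
  hence "S.nrm (zeta * yy l) = cmod (of_real (1 / Rr) :: complex) * S.nrm (X * yy l)" by (simp only: S.nrm_smult)
  also have "cmod (of_real (1 / Rr) :: complex) = 1 / Rr" using Rpos by (simp only: norm_of_real) simp
  finally have "S.nrm (zeta * yy l) = (1 / Rr) * S.nrm (X * yy l)" .
  also have "\<dots> \<le> (1 / Rr) * (Rr * S.nrm (yy l))" using Rbound[OF yV] Rpos by (intro mult_left_mono) auto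
  also have "\<dots> = S.nrm (yy l)" using Rpos by simp
  finally have "(S.nrm (zeta * yy l))^2 \<le> (S.nrm (yy l))^2"
    using S.nrm_nonneg by (intro power_mono) auto
  thus ?thesis by (simp add: S.nrm_sq)
qed

lemma Q_pos: "0 \<le> Re (Q d)"
proof -
  have "Re (Q d) = Re (ipL (yy d) (yy d)) + (\<Sum>l<d. Re (ipL (yy l) (yy l)) - Re (ipL (zeta * yy l) (zeta * yy l)))"
    using tele[of d] by simp
  moreover have "0 \<le> (\<Sum>l<d. Re (ipL (yy l) (yy l)) - Re (ipL (zeta * yy l) (zeta * yy l)))"
    using contr by (intro sum_nonneg) auto
  ultimately show ?thesis using S.ip_pos[of "yy d"] by simp
qed

end

end


context Tctx begin

definition ipT where "ipT f g = (\<Sum>i\<le>d. \<Sum>j\<le>d. coeff f i * cnj (coeff g j) * sg i j)"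

lemma sg_cnj: "cnj (sg i j) = sg j i" using sg_herm[of j i] by simp

lemma ipT_Q: "ipT f f = Q (coeff f) d" unfolding ipT_def Q_def by simp

sublocale T: toep ipT d
proof
  fix f g h :: "complex poly" and a :: complex
  show "ipT (f + g) h = ipT f h + ipT g h"
    unfolding ipT_def by (simp add: sum.distrib algebra_simps)
  show "ipT (smult a f) g = a * ipT f g"
    unfolding ipT_def by (simp add: sum_distrib_left algebra_simps)
  show "ipT g f = cnj (ipT f g)"
  proof -
    have "cnj (ipT f g) = (\<Sum>i\<le>d. \<Sum>j\<le>d. coeff g j * cnj (coeff f i) * sg j i)"
      unfolding ipT_def by (simp add: sg_cnj mult.commute mult.left_commute)
    also have "\<dots> = ipT g f" unfolding ipT_def by (rule sum.swap)
    finally show ?thesis by simp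
  qed
  show "0 \<le> Re (ipT f f)" unfolding ipT_Q by (rule Q_pos)
next
  fix f g :: "complex poly"
  assume f: "degree f < d" and g: "degree g < d"
  then obtain d' where d': "d = Suc d'" by (cases d) auto
  have cf: "coeff f d = 0" "coeff g d = 0" using f g by (simp_all add: coeff_eq_0)
  have D: "{..d} = {..Suc d'}" using d' by simp
  have "ipT (X * f) (X * g) = (\<Sum>i\<le>d'. \<Sum>j\<le>d'. coeff f i * cnj (coeff g j) * sg (Suc i) (Suc j))"
    unfolding ipT_def D sum.atMost_Suc_shift by (simp del: sum.atMost_Suc)
  also have "\<dots> = (\<Sum>i\<le>d'. \<Sum>j\<le>d'. coeff f i * cnj (coeff g j) * sg i j)"
    by (simp add: sg_def cong: if_cong)
  also have "\<dots> = ipT f g"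
    unfolding ipT_def D using cf unfolding d' by simp
  finally show "ipT (X * f) (X * g) = ipT f g" .
qed

lemma ipT_mom: "j \<le> d \<Longrightarrow> ipT (monom 1 j) 1 = s j"
proof -
  assume j: "j \<le> d"
  have inner: "(\<Sum>k\<le>d. coeff (monom 1 j) i * cnj (coeff 1 k) * sg i k) = coeff (monom 1 j) i * sg i 0" for i
    by (subst sum.atMost_shift) simp
  have "ipT (monom 1 j) 1 = (\<Sum>i\<le>d. coeff (monom 1 j) i * sg i 0)"
    unfolding ipT_def inner ..
  also have "\<dots> = (\<Sum>i\<le>d. if i = j then sg j 0 else 0)" by (intro sum.cong refl) auto
  also have "\<dots> = sg j 0" using j by simp
  finally show ?thesis by (simp add: sg_def)
qed

lemma quad_pos:
  "\<exists>N zs c. N \<le> d + 1 \<and> (\<forall>k<N. cmod (zs k) = Rr \<and> (c k :: real) > 0) \<and>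
      (\<forall>j\<le>d. mm j = (\<Sum>k<N. of_real (c k) * zs k ^ j))"
proof -
  obtain N l c where Nlc: "N \<le> d + 1" "\<forall>k<N. cmod (l k) = 1 \<and> (c k :: real) > 0"
     "\<forall>j\<le>d. ipT (monom 1 j) 1 = (\<Sum>k<N. of_real (c k) * l k ^ j)"
    using T.toep_quad by blast
  define zs where "zs k = of_real Rr * l k" for k
  have "\<forall>k<N. cmod (zs k) = Rr" using Nlc(2) Rpos by (simp add: zs_def norm_mult)
  moreover have "mm j = (\<Sum>k<N. of_real (c k) * zs k ^ j)" if j: "j \<le> d" for j
  proof -
    have "s j = (\<Sum>k<N. of_real (c k) * l k ^ j)" using Nlc(3) ipT_mom j by simp
    hence "mm j = of_real (Rr ^ j) * (\<Sum>k<N. of_real (c k) * l k ^ j)"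
      unfolding s_def using Rpos by (simp add: field_simps)
    also have "\<dots> = (\<Sum>k<N. of_real (c k) * zs k ^ j)"
      unfolding sum_distrib_left zs_def by (intro sum.cong refl) (simp add: power_mult_distrib)
    finally show ?thesis .
  qed
  ultimately show ?thesis using Nlc by blast
qed

end


context Lctx begin

lemma quad_zero:
  assumes R0: "Md_norm L d = 0"
  shows "\<exists>N zs c. N \<le> d + 1 \<and> (\<forall>k<N. cmod (zs k) = Md_norm L d \<and> (c k :: real) > 0) \<and>
      (\<forall>j\<le>d. ipL (monom 1 j) 1 = (\<Sum>k<N. of_real (c k) * zs k ^ j))"
proof -
  have null: "ipL (monom 1 j) 1 = 0" if j: "1 \<le> j" "j \<le> d" for j
  proof -
    have mj: "monom 1 j = X * monom 1 (j - 1)" using j by (cases j) (auto simp: monom_Suc)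
    have "monom 1 (j - 1) \<in> V BM d" using j by (intro deg_VB) (simp add: degree_monom_eq)
    hence "S.nrm (X * monom 1 (j - 1)) \<le> Md_norm L d * S.nrm (monom 1 (j - 1))" by (rule Rbound)
    hence "S.nrm (X * monom 1 (j - 1)) \<le> 0" using R0 by simp
    hence "S.nrm (monom 1 j) = 0" using mj S.nrm_nonneg[of "monom 1 j"] by simp
    hence "ipL (monom 1 j) (monom 1 j) = 0" using S.nrm_zero_iff by blast
    thus ?thesis by (rule S.null_orth)
  qed
  show ?thesis
  proof (cases "ipL 1 1 = 0")
    case True
    have "ipL (monom 1 j) 1 = 0" for j by (rule S.null_orth2[OF True])
    thus ?thesis by (intro exI[of _ 0]) auto
  next
    case False
    define c0 where "c0 = Re (ipL 1 1)"
    have i11: "ipL 1 1 = of_real c0" unfolding c0_def by (rule S.ip_real)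
    have "c0 \<noteq> 0" using False i11 by auto
    hence c0: "c0 > 0" using S.ip_pos[of 1] unfolding c0_def by linarith
    have "\<forall>j\<le>d. ipL (monom 1 j) 1 = (\<Sum>k<Suc 0. of_real ((\<lambda>_. c0) k) * (\<lambda>_. 0::complex) k ^ j)"
    proof (intro allI impI)
      fix j assume jd: "j \<le> d"
      show "ipL (monom 1 j) 1 = (\<Sum>k<Suc 0. of_real ((\<lambda>_. c0) k) * (\<lambda>_. 0::complex) k ^ j)"
      proof (cases "j = 0")
        case True thus ?thesis using i11 by simp
      next
        case False thus ?thesis using null[of j] jd by simp
      qed
    qed
    moreover have "Suc 0 \<le> d + 1" by simp
    moreover have "\<forall>k<Suc 0. cmod ((\<lambda>_. 0::complex) k) = Md_norm L d \<and> (\<lambda>_. c0) k > 0" using c0 R0 by simp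
    ultimately show ?thesis by (intro exI[of _ "Suc 0"] exI[of _ "\<lambda>_. 0::complex"] exI[of _ "\<lambda>_. c0"] conjI)
  qed
qed

lemma quad:
  "\<exists>N zs c. N \<le> d + 1 \<and> (\<forall>k<N. cmod (zs k) = Md_norm L d \<and> (c k :: real) > 0) \<and>
      (\<forall>j\<le>d. ipL (monom 1 j) 1 = (\<Sum>k<N. of_real (c k) * zs k ^ j))"
proof (cases "Md_norm L d = 0")
  case True thus ?thesis by (rule quad_zero)
next
  case False
  hence Rp: "Md_norm L d > 0" using R_nonneg by simp
  interpret T: Tctx d L by unfold_locales (rule Rp)
  show ?thesis using T.quad_pos unfolding T.mm_def .
qed

definition EE :: "nat \<Rightarrow> nat \<Rightarrow> zpoly" where "EE a b = (\<lambda>j k. if j = a \<and> k = b then 1 else 0)"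

lemma EE_tot: "a \<le> d \<Longrightarrow> b \<le> d \<Longrightarrow> EE a b \<in> tot_deg_le (2 * d + 2)"
  unfolding EE_def tot_deg_le_def by auto

lemma L_sum: "finite A \<Longrightarrow> (\<forall>x\<in>A. F x \<in> tot_deg_le (2 * d + 2)) \<Longrightarrow>
    L (\<lambda>j k. \<Sum>x\<in>A. F x j k) = (\<Sum>x\<in>A. L (F x))"
proof (induction A rule: finite_induct)
  case empty thus ?case by (simp add: L_zero)
next
  case (insert x A)
  have tA: "(\<lambda>j k. \<Sum>x\<in>A. F x j k) \<in> tot_deg_le (2 * d + 2)"
    using insert.prems unfolding tot_deg_le_def by auto
  have "L (\<lambda>j k. \<Sum>y\<in>insert x A. F y j k) = L (\<lambda>j k. F x j k + (\<Sum>y\<in>A. F y j k))"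
    using insert.hyps by simp
  also have "\<dots> = L (F x) + L (\<lambda>j k. \<Sum>y\<in>A. F y j k)"
    using L_add[of "F x" "\<lambda>j k. \<Sum>y\<in>A. F y j k"] insert.prems tA by simp
  finally show ?case using insert by simp
qed

lemma L_EE0: "j \<le> d \<Longrightarrow> L (EE j 0) = ipL (monom 1 j) 1"
proof -
  assume j: "j \<le> d"
  have "herm (monom 1 j) 1 = EE j 0" unfolding herm_def EE_def by (auto simp: fun_eq_iff coeff_1)
  moreover have "degree (monom 1 j :: complex poly) \<le> d + 1" using j by (simp add: degree_monom_le order.trans[OF degree_monom_le])
  ultimately show ?thesis using ipL_herm by simp
qed

lemma L_EE0': "k \<le> d \<Longrightarrow> L (EE 0 k) = cnj (L (EE k 0))"
proof -
  assume "k \<le> d"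
  moreover have "zp_conj (EE k 0) = EE 0 k" unfolding zp_conj_def EE_def by (auto simp: fun_eq_iff)
  ultimately show ?thesis using real EE_tot[of k 0] unfolding real_functional_on_def by force
qed

end

theorem theorem1:
  fixes d :: nat and L :: "zpoly \<Rightarrow> complex"
  assumes lin: "lin_functional_on (tot_deg_le (2 * d + 2)) L"
    and real: "real_functional_on (tot_deg_le (2 * d + 2)) L"
    and pos: "\<And>f. degree f \<le> d + 1 \<Longrightarrow> L (herm f f) \<in> \<real> \<and> 0 \<le> Re (L (herm f f))"
    and welldef: "\<And>p. degree p \<le> d \<Longrightarrow> L (herm p p) = 0 \<Longrightarrow>
                     L (herm ([:0, 1:] * p) ([:0, 1:] * p)) = 0"
  shows "\<exists>N zs c. N \<le> (d + 1) ^ 2 \<and>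
           (\<forall>k<N. cmod (zs k) = Md_norm L d \<and> (c k :: real) > 0) \<and>
           (\<forall>h \<in> bideg_le d d. harmonic h \<longrightarrow>
               L h = (\<Sum>k<N. of_real (c k) * zp_eval d h (zs k)))"
proof -
  interpret Lctx d L using assms by unfold_locales
  obtain N zs c where Nzc: "N \<le> d + 1" "\<forall>k<N. cmod (zs k) = Md_norm L d \<and> (c k :: real) > 0"
    "\<forall>j\<le>d. ipL (monom 1 j) 1 = (\<Sum>k<N. of_real (c k) * zs k ^ j)"
    using quad by blast
  have "d + 1 \<le> (d + 1) * (d + 1)" by (rule le_square)
  hence N2: "N \<le> (d + 1) ^ 2" using Nzc(1) by (simp add: power2_eq_square)
  have "L h = (\<Sum>k<N. of_real (c k) * zp_eval d h (zs k))"
    if hb: "h \<in> bideg_le d d" and hh: "harmonic h" for h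
  proof -
    have hout: "h j k = 0" if "d < j \<or> d < k" for j k using hb that unfolding bideg_le_def by blast
    have hz: "h j k = 0" if "1 \<le> j" "1 \<le> k" for j k
    proof -
      have "zp_dzdzbar h (j - 1) (k - 1) = 0" using hh unfolding harmonic_def by simp
      thus ?thesis using that unfolding zp_dzdzbar_def by simp
    qed
    define A where "A = {..d} \<times> {..d}"
    have heq: "h = (\<lambda>j k. \<Sum>x\<in>A. h (fst x) (snd x) * EE (fst x) (snd x) j k)"
    proof (intro ext)
      fix j k
      have "(\<Sum>x\<in>A. h (fst x) (snd x) * EE (fst x) (snd x) j k) = (\<Sum>x\<in>A. if x = (j, k) then h j k else 0)"
        unfolding EE_def by (intro sum.cong refl) auto
      also have "\<dots> = h j k" unfolding A_def using hout[of j k] by (auto simp: sum.delta')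
      finally show "h j k = (\<Sum>x\<in>A. h (fst x) (snd x) * EE (fst x) (snd x) j k)" by simp
    qed
    have "L h = (\<Sum>x\<in>A. L (\<lambda>j k. h (fst x) (snd x) * EE (fst x) (snd x) j k))"
      by (subst heq, rule L_sum) (auto simp: A_def tot_deg_le_def EE_def)
    also have "\<dots> = (\<Sum>x\<in>A. h (fst x) (snd x) * L (EE (fst x) (snd x)))"
      by (intro sum.cong refl L_smult EE_tot) (auto simp: A_def)
    also have "\<dots> = (\<Sum>x\<in>A. \<Sum>n<N. of_real (c n) * (h (fst x) (snd x) * zs n ^ fst x * cnj (zs n) ^ snd x))"
    proof (rule sum.cong[OF refl])
      fix x assume "x \<in> A"
      then obtain j k where x: "x = (j, k)" "j \<le> d" "k \<le> d" unfolding A_def by auto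
      show "h (fst x) (snd x) * L (EE (fst x) (snd x)) =
            (\<Sum>n<N. of_real (c n) * (h (fst x) (snd x) * zs n ^ fst x * cnj (zs n) ^ snd x))"
      proof (cases "h j k = 0")
        case True thus ?thesis using x by simp
      next
        case False
        hence "j = 0 \<or> k = 0" using hz[of j k] by linarith
        thus ?thesis
        proof
          assume k0: "k = 0"
          have "L (EE j 0) = (\<Sum>n<N. of_real (c n) * zs n ^ j)" using L_EE0 Nzc(3) x by simp
          thus ?thesis using x k0 by (simp add: sum_distrib_left algebra_simps)
        next
          assume j0: "j = 0"
          have "L (EE 0 k) = cnj (\<Sum>n<N. of_real (c n) * zs n ^ k)" using L_EE0' L_EE0 Nzc(3) x by simp
          also have "\<dots> = (\<Sum>n<N. of_real (c n) * cnj (zs n) ^ k)" by simp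
          finally show ?thesis using x j0 by (simp add: sum_distrib_left algebra_simps)
        qed
      qed
    qed
    also have "\<dots> = (\<Sum>n<N. \<Sum>x\<in>A. of_real (c n) * (h (fst x) (snd x) * zs n ^ fst x * cnj (zs n) ^ snd x))"
      by (rule sum.swap)
    also have "\<dots> = (\<Sum>n<N. of_real (c n) * zp_eval d h (zs n))"
    proof (rule sum.cong[OF refl])
      fix n
      have "zp_eval d h (zs n) = (\<Sum>x\<in>A. h (fst x) (snd x) * zs n ^ fst x * cnj (zs n) ^ snd x)"
        unfolding zp_eval_def A_def sum.cartesian_product by (simp add: case_prod_beta)
      thus "(\<Sum>x\<in>A. of_real (c n) * (h (fst x) (snd x) * zs n ^ fst x * cnj (zs n) ^ snd x)) =
            of_real (c n) * zp_eval d h (zs n)" by (simp add: sum_distrib_left)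
    qed
    finally show ?thesis .
  qed
  thus ?thesis using N2 Nzc(2) by blast
qed


end
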